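(* Let $G$ be a $c$-almost-complete graph on $n$ vertices. Then for every integer $m$ with $m\ge3$ and $2c+2\le m\le n$, $G$ contains a cycle of length exactly $m$.
   Context: A graph on $n$ vertices is $c$-almost-complete if its minimum degree is at least $(n-1)-c$. *)

theory Defs
  imports Main
begin

definition simple_graph :: "'a set \<Rightarrow> ('a \<Rightarrow> 'a \<Rightarrow> bool) \<Rightarrow> bool" where
  "simple_graph V E \<longleftrightarrow> finite V \<and> (\<forall>x y. E x y \<longrightarrow> x \<in> V \<and> y \<in> V)
     \<and> (\<forall>x y. E x y \<longrightarrow> E y x) \<and> (\<forall>x. \<not> E x x)"

definition degree :: "'a set \<Rightarrow> ('a \<Rightarrow> 'a \<Rightarrow> bool) \<Rightarrow> 'a \<Rightarrow> nat" where
  "degree V E v = card {u \<in> V. E v u}"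

definition almost_complete :: "nat \<Rightarrow> 'a set \<Rightarrow> ('a \<Rightarrow> 'a \<Rightarrow> bool) \<Rightarrow> bool" where
  "almost_complete c V E \<longleftrightarrow>
     (\<forall>v\<in>V. int (degree V E v) \<ge> (int (card V) - 1) - int c)"

definition has_cycle_of_length :: "'a set \<Rightarrow> ('a \<Rightarrow> 'a \<Rightarrow> bool) \<Rightarrow> nat \<Rightarrow> bool" where
  "has_cycle_of_length V E m \<longleftrightarrow> 3 \<le> m \<and>
     (\<exists>vs. length vs = m \<and> distinct vs \<and> set vs \<subseteq> V \<and>
        (\<forall>i<m. E (vs ! i) (vs ! ((i + 1) mod m))))"

end

theory Submission
  imports Defs
begin

fun pth :: "('a \<Rightarrow> 'a \<Rightarrow> bool) \<Rightarrow> 'a list \<Rightarrow> bool" where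
  "pth E [] = True"
| "pth E [x] = True"
| "pth E (x#y#zs) = (E x y \<and> pth E (y#zs))"

lemma pth_Cons: "pth E (x#ys) = (ys = [] \<or> (E x (hd ys) \<and> pth E ys))"
  by (cases ys) auto

lemma pth_append:
  "pth E (xs @ ys) \<longleftrightarrow> pth E xs \<and> pth E ys \<and> (xs \<noteq> [] \<longrightarrow> ys \<noteq> [] \<longrightarrow> E (last xs) (hd ys))"
  by (induction xs) (auto simp: pth_Cons)

lemma pth_rev:
  assumes "\<forall>x y. E x y \<longrightarrow> E y x"
  shows "pth E xs \<Longrightarrow> pth E (rev xs)"
  by (induction xs) (auto simp: pth_Cons pth_append assms last_rev)

lemma pth_nth: "pth E xs \<longleftrightarrow> (\<forall>i. Suc i < length xs \<longrightarrow> E (xs!i) (xs!Suc i))"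
proof (induction xs)
  case (Cons x ys)
  show ?case
  proof (cases ys)
    case Nil then show ?thesis by simp
  next
    case (Cons y zs)
    have "pth E (x#ys) \<longleftrightarrow> E x y \<and> pth E ys" using Cons by simp
    also have "\<dots> \<longleftrightarrow> (\<forall>i. Suc i < length (x#ys) \<longrightarrow> E ((x#ys)!i) ((x#ys)!Suc i))"
      unfolding Cons.IH using Cons by (auto simp: nth_Cons split: nat.splits)
    finally show ?thesis .
  qed
qed simp

definition cyc :: "('a \<Rightarrow> 'a \<Rightarrow> bool) \<Rightarrow> 'a list \<Rightarrow> bool" where
  "cyc E xs \<longleftrightarrow> xs \<noteq> [] \<and> pth E xs \<and> E (last xs) (hd xs)"

lemma cyc_rotate1: "cyc E xs \<Longrightarrow> cyc E (rotate1 xs)"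
proof -
  assume c: "cyc E xs"
  then obtain x ys where xs: "xs = x # ys" unfolding cyc_def by (cases xs) auto
  show ?thesis
  proof (cases ys)
    case Nil then show ?thesis using c xs by simp
  next
    case (Cons y zs)
    have p: "pth E ys" "E x y" using c xs Cons unfolding cyc_def by (auto simp: pth_Cons)
    have l: "E (last ys) x" using c xs Cons unfolding cyc_def by simp
    have "pth E (ys @ [x])" using p l Cons pth_append[of E ys "[x]"] by simp
    then show ?thesis using xs Cons p l unfolding cyc_def by simp
  qed
qed

lemma cyc_rotate: "cyc E xs \<Longrightarrow> cyc E (rotate n xs)"
  by (induction n) (auto simp: cyc_rotate1)

lemma dirac:
  assumes fin: "finite S" and m: "card S = m" "3 \<le> m"
    and sym: "\<forall>x y. E x y \<longrightarrow> E y x" and irr: "\<forall>x. \<not> E x x"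
    and deg: "\<forall>v\<in>S. m \<le> 2 * card {u\<in>S. E v u}"
  shows "\<exists>vs. distinct vs \<and> set vs = S \<and> cyc E vs"
proof -
  define P where "P xs \<longleftrightarrow> distinct xs \<and> set xs \<subseteq> S \<and> pth E xs \<and> xs \<noteq> []" for xs
  have "S \<noteq> {}" using m by auto
  then obtain v0 where "v0 \<in> S" by auto
  then have "P [v0]" unfolding P_def by simp
  have bound: "\<forall>xs. P xs \<longrightarrow> length xs < m+1"
  proof (intro allI impI)
    fix xs assume "P xs"
    then have "card (set xs) \<le> card S" unfolding P_def using fin card_mono by blast
    then show "length xs < m+1" using \<open>P xs\<close> m unfolding P_def by (simp add: distinct_card)
  qed
  obtain xs where Pxs: "P xs" and mx: "\<forall>ys. P ys \<longrightarrow> length ys \<le> length xs"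
    using ex_has_greatest_nat[of P "[v0]" length "m+1"] \<open>P [v0]\<close> bound by blast
  have dx: "distinct xs" and sx: "set xs \<subseteq> S" and px: "pth E xs" and nx: "xs \<noteq> []"
    using Pxs unfolding P_def by auto
  define k where "k = length xs - 1"
  have lk: "length xs = Suc k" using nx unfolding k_def by (cases xs) auto
  have lenm: "k + 1 \<le> m" using bound Pxs lk by auto
  have hdx: "hd xs = xs ! 0" using nx by (simp add: hd_conv_nth)
  have lastx: "last xs = xs ! k" using nx lk by (simp add: last_conv_nth)
  have nbr0: "u \<in> set xs" if "u \<in> S" "E (xs!0) u" for u
  proof (rule ccontr)
    assume "u \<notin> set xs"
    then have "P (u # xs)" using dx sx px nx that sym hdx unfolding P_def by (auto simp: pth_Cons)
    then show False using mx by fastforce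
  qed
  have nbrk: "u \<in> set xs" if "u \<in> S" "E (xs!k) u" for u
  proof (rule ccontr)
    assume "u \<notin> set xs"
    then have "P (xs @ [u])" using dx sx px nx that lastx unfolding P_def by (auto simp: pth_append)
    then show False using mx by fastforce
  qed
  define A where "A = {i. i < k \<and> E (xs!0) (xs!Suc i)}"
  define B where "B = {i. i < k \<and> E (xs!i) (xs!k)}"
  have Ak: "A \<subseteq> {..<k}" and Bk: "B \<subseteq> {..<k}" unfolding A_def B_def by auto
  have finA: "finite A" and finB: "finite B" using Ak Bk finite_subset by blast+
  have "{u\<in>S. E (xs!0) u} \<subseteq> (\<lambda>i. xs!Suc i) ` A"
  proof
    fix u assume u: "u \<in> {u\<in>S. E (xs!0) u}"
    then have "u \<in> set xs" using nbr0 by auto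
    then obtain j where j: "j < length xs" "xs!j = u" by (auto simp: in_set_conv_nth)
    have "j \<noteq> 0"
    proof
      assume "j = 0" with u j irr show False by auto
    qed
    then obtain i where "j = Suc i" by (cases j) auto
    then show "u \<in> (\<lambda>i. xs!Suc i) ` A" using j u lk unfolding A_def by auto
  qed
  then have cA: "card {u\<in>S. E (xs!0) u} \<le> card A"
    using finA card_image_le card_mono finite_imageI order_trans by metis
  have "{u\<in>S. E (xs!k) u} \<subseteq> (\<lambda>i. xs!i) ` B"
  proof
    fix u assume u: "u \<in> {u\<in>S. E (xs!k) u}"
    then have "u \<in> set xs" using nbrk by auto
    then obtain j where j: "j < length xs" "xs!j = u" by (auto simp: in_set_conv_nth)
    have "j \<noteq> k" using u j irr by auto
    then have "j < k" using j lk by auto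
    then show "u \<in> (\<lambda>i. xs!i) ` B" using j u sym unfolding B_def by auto
  qed
  then have cB: "card {u\<in>S. E (xs!k) u} \<le> card B"
    using finB card_image_le card_mono finite_imageI order_trans by metis
  have x0S: "xs!0 \<in> S" and xkS: "xs!k \<in> S" using sx lk by (auto simp: nth_mem subsetD)
  have dA: "m \<le> 2 * card A" using deg x0S cA by fastforce
  have dB: "m \<le> 2 * card B" using deg xkS cB by fastforce
  have cAk: "card A \<le> k" using card_mono[OF _ Ak] by simp
  have "A \<inter> B \<noteq> {}"
  proof
    assume "A \<inter> B = {}"
    then have "card (A \<union> B) = card A + card B" using finA finB card_Un_disjoint by blast
    moreover have "card (A \<union> B) \<le> k" using card_mono[of "{..<k}" "A \<union> B"] Ak Bk by simp
    ultimately show False using dA dB lenm by linarith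
  qed
  then obtain i where iA: "i \<in> A" and iB: "i \<in> B" by auto
  have ik: "i < k" and Ei0: "E (xs!0) (xs!Suc i)" and Eik: "E (xs!i) (xs!k)"
    using iA iB unfolding A_def B_def by auto
  define ys where "ys = take (Suc i) xs @ rev (drop (Suc i) xs)"
  have tdx: "take (Suc i) xs @ drop (Suc i) xs = xs" by simp
  have sys: "set ys = set xs"
    by (metis set_append set_rev tdx ys_def)
  have dys: "distinct ys"
    using dx tdx unfolding ys_def by (metis distinct_append distinct_rev set_rev)
  have lys: "length ys = length xs" unfolding ys_def by simp
  have pt: "pth E (take (Suc i) xs)" and pd: "pth E (drop (Suc i) xs)"
    using px tdx pth_append[of E "take (Suc i) xs" "drop (Suc i) xs"] by auto
  have prd: "pth E (rev (drop (Suc i) xs))" using pth_rev[OF sym pd] .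
  have ne1: "take (Suc i) xs \<noteq> []" and ne2: "drop (Suc i) xs \<noteq> []" using nx ik lk by auto
  have lt: "last (take (Suc i) xs) = xs!i" using ne1 ik lk by (simp add: last_conv_nth min_def)
  have hr: "hd (rev (drop (Suc i) xs)) = xs!k"
    using ik lk lastx by (simp add: hd_rev last_drop)
  have pys: "pth E ys" unfolding ys_def using pt prd ne1 ne2 lt hr Eik
    by (simp add: pth_append)
  have lys2: "last ys = xs ! Suc i" unfolding ys_def using ne2 ik lk
    by (simp add: last_rev hd_drop_conv_nth)
  have hys: "hd ys = xs ! 0" unfolding ys_def using nx by (cases xs) auto
  have cys: "cyc E ys" unfolding cyc_def using pys lys2 hys Ei0 sym ne1 ys_def by auto
  show ?thesis
  proof (cases "set xs = S")
    case True then show ?thesis using dys sys cys by auto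
  next
    case False
    then obtain w where w: "w \<in> S" "w \<notin> set xs" using sx by auto
    have "\<exists>u\<in>set xs. E w u"
    proof (rule ccontr)
      assume "\<not> ?thesis"
      then have sub: "{u\<in>S. E w u} \<subseteq> S - insert w (set xs)" using irr by auto
      have ci: "card (insert w (set xs)) = k + 2" using w dx lk by (simp add: distinct_card)
      have "card (S - insert w (set xs)) = m - (k+2)"
        using card_Diff_subset[of "insert w (set xs)" S] w sx ci m by auto
      then have "card {u\<in>S. E w u} \<le> m - (k+2)" using card_mono[OF _ sub] fin by auto
      moreover have "m \<le> 2 * card {u\<in>S. E w u}" using deg w by blast
      ultimately show False using dA cAk m(2) by linarith
    qed
    then obtain u where u: "u \<in> set ys" "E w u" using sys by auto
    then obtain j where j: "j < length ys" "ys!j = u" by (auto simp: in_set_conv_nth)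
    define zs where "zs = rotate j ys"
    have cz: "cyc E zs" unfolding zs_def using cyc_rotate[OF cys] .
    have hz: "hd zs = u" unfolding zs_def using j ne1 ys_def by (simp add: hd_rotate_conv_nth)
    have "P (w # zs)" unfolding P_def using cz hz u w dys sys sx
      unfolding zs_def cyc_def by (auto simp: pth_Cons)
    moreover have "length (w # zs) > length xs" unfolding zs_def using lys by simp
    ultimately have False using mx by fastforce
    then show ?thesis by simp
  qed
qed

theorem corollary7p2:
  fixes V :: "'a set" and E :: "'a \<Rightarrow> 'a \<Rightarrow> bool" and c n m :: nat
  assumes "simple_graph V E"
    and "card V = n"
    and "almost_complete c V E"
    and "m \<ge> 3" and "2 * c + 2 \<le> m" and "m \<le> n"
  shows "has_cycle_of_length V E m"
proof -
  have finV: "finite V" and sym: "\<forall>x y. E x y \<longrightarrow> E y x" and irr: "\<forall>x. \<not> E x x"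
    using assms(1) unfolding simple_graph_def by auto
  obtain T where T: "T \<subseteq> V" "card T = m" "finite T"
    using obtain_subset_with_card_n[of m V] assms by auto
  have deg: "\<forall>v\<in>T. m \<le> 2 * card {u\<in>T. E v u}"
  proof
    fix v assume v: "v \<in> T"
    have "{u\<in>V. E v u} \<subseteq> {u\<in>T. E v u} \<union> (V - T)" by auto
    then have "card {u\<in>V. E v u} \<le> card ({u\<in>T. E v u} \<union> (V - T))"
      using finV T(3) by (intro card_mono) auto
    also have "\<dots> \<le> card {u\<in>T. E v u} + card (V - T)" by (rule card_Un_le)
    also have "card (V - T) = n - m" using card_Diff_subset[OF T(3) T(1)] T assms(2) by simp
    finally have a: "card {u\<in>V. E v u} \<le> card {u\<in>T. E v u} + (n - m)" .
    have b: "int (card {u\<in>V. E v u}) \<ge> int n - 1 - int c"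
      using assms(2,3) v T(1) unfolding almost_complete_def degree_def by auto
    show "m \<le> 2 * card {u\<in>T. E v u}" using a b assms(5,6) by linarith
  qed
  obtain vs where vs: "distinct vs" "set vs = T" "cyc E vs"
    using dirac[OF T(3) T(2) assms(4) sym irr deg] by blast
  have lv: "length vs = m" using vs T by (metis distinct_card)
  have pv: "pth E vs" and cl: "E (last vs) (hd vs)" and nv: "vs \<noteq> []"
    using vs(3) unfolding cyc_def by auto
  show ?thesis unfolding has_cycle_of_length_def
  proof (intro conjI exI[of _ vs] allI impI)
    fix i assume i: "i < m"
    show "E (vs ! i) (vs ! ((i + 1) mod m))"
    proof (cases "Suc i < m")
      case True then show ?thesis using pv lv by (simp add: pth_nth)
    next
      case False
      then have si: "Suc i = m" using i by auto
      then have "i = m - 1" "(i+1) mod m = 0" by auto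
      then show ?thesis using cl nv lv by (simp add: last_conv_nth hd_conv_nth)
    qed
  qed (use assms vs lv T in auto)
qed

end
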